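(* Let $\mathcal{G}$ be a metric graph as in the context and suppose $\overline{\mathcal{G}}$ is compact. Then $\partial\overline{\mathcal{G}}$ is totally disconnected if and only if $\overline{\mathcal{G}}$ is weakly connected.
   Context: $\mathcal{G}$ is a connected, locally finite metric graph with countable vertex set and countable edge set. Each edge $e$ has a length $l_e>0$ and is identified with an interval of that length. $\mathcal{G}$ carries the geodesic distance (infimum of lengths of paths), and $\overline{\mathcal{G}}$ is its metric completion. A designated set of vertices, containing all vertices of degree $1$, forms the boundary vertices. $\mathcal{G}_{int}$ is $\mathcal{G}$ minus the boundary vertices, and $\partial\overline{\mathcal{G}}=\overline{\mathcal{G}}\setminus\mathcal{G}_{int}$. $\overline{\mathcal{G}}$ is weakly connected if for every pair of distinct points $x,y\in\overline{\mathcal{G}}$ there is a finite set $W$ of points of $\mathcal{G}$ and disjoint open subsets $U_x\ni x$, $U_y\ni y$ of $\overline{\mathcal{G}}$ with $\overline{\mathcal{G}}\setminus W=U_x\cup U_y$. *)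

theory Defs
  imports "HOL-Analysis.Analysis"
begin

text \<open>A metric graph is given by a vertex set V, an edge set E, an endpoint map
  ends (edge e joins fst (ends e) and snd (ends e); loops and multiple edges allowed)
  and edge lengths len. Points of the graph are vertices or interior points of edges,
  the point at distance t from fst (ends e) along e, 0 < t < len e.\<close>

datatype ('v, 'e) gpoint = Vert 'v | EdgePt 'e real

definition gpoints :: "'v set \<Rightarrow> 'e set \<Rightarrow> ('e \<Rightarrow> real) \<Rightarrow> ('v, 'e) gpoint set" where
  "gpoints V E len = Vert ` V \<union> {EdgePt e t | e t. e \<in> E \<and> 0 < t \<and> t < len e}"

inductive walk :: "'e set \<Rightarrow> ('e \<Rightarrow> 'v \<times> 'v) \<Rightarrow> 'v \<Rightarrow> 'e list \<Rightarrow> 'v \<Rightarrow> bool"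
  for E ends where
  walk_Nil: "walk E ends u [] u"
| walk_Cons: "\<lbrakk>e \<in> E; ends e = (u, w) \<or> ends e = (w, u); walk E ends w es v\<rbrakk>
               \<Longrightarrow> walk E ends u (e # es) v"

definition incident :: "'e set \<Rightarrow> ('e \<Rightarrow> 'v \<times> 'v) \<Rightarrow> 'v \<Rightarrow> 'e set" where
  "incident E ends v = {e \<in> E. fst (ends e) = v \<or> snd (ends e) = v}"

text \<open>Degree (a loop counts twice).\<close>
definition degree :: "'e set \<Rightarrow> ('e \<Rightarrow> 'v \<times> 'v) \<Rightarrow> 'v \<Rightarrow> nat" where
  "degree E ends v = card {e \<in> E. fst (ends e) = v} + card {e \<in> E. snd (ends e) = v}"

definition metric_graph ::
  "'v set \<Rightarrow> 'e set \<Rightarrow> ('e \<Rightarrow> 'v \<times> 'v) \<Rightarrow> ('e \<Rightarrow> real) \<Rightarrow> 'v set \<Rightarrow> bool" where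
  "metric_graph V E ends len B \<longleftrightarrow>
     countable V \<and> countable E \<and> V \<noteq> {} \<and>
     (\<forall>e\<in>E. fst (ends e) \<in> V \<and> snd (ends e) \<in> V \<and> 0 < len e) \<and>
     (\<forall>v\<in>V. finite (incident E ends v)) \<and>
     (\<forall>u\<in>V. \<forall>v\<in>V. \<exists>es. walk E ends u es v) \<and>
     B \<subseteq> V \<and> {v \<in> V. degree E ends v = 1} \<subseteq> B"

definition vdist :: "'e set \<Rightarrow> ('e \<Rightarrow> 'v \<times> 'v) \<Rightarrow> ('e \<Rightarrow> real) \<Rightarrow> 'v \<Rightarrow> 'v \<Rightarrow> real" where
  "vdist E ends len u v = Inf {sum_list (map len es) | es. walk E ends u es v}"

text \<open>Ways of leaving a point towards a vertex: (vertex reached, distance travelled).\<close>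
fun exits :: "('e \<Rightarrow> 'v \<times> 'v) \<Rightarrow> ('e \<Rightarrow> real) \<Rightarrow> ('v, 'e) gpoint \<Rightarrow> ('v \<times> real) set" where
  "exits ends len (Vert v) = {(v, 0)}"
| "exits ends len (EdgePt e t) = {(fst (ends e), t), (snd (ends e), len e - t)}"

text \<open>A path either stays inside one edge,
  or leaves the start point through an end of its edge, follows a walk, and enters the
  end point's edge through one of its ends.\<close>
definition gdist :: "'e set \<Rightarrow> ('e \<Rightarrow> 'v \<times> 'v) \<Rightarrow> ('e \<Rightarrow> real) \<Rightarrow>
    ('v, 'e) gpoint \<Rightarrow> ('v, 'e) gpoint \<Rightarrow> real" where
  "gdist E ends len x y = Inf
     ({\<bar>t - s\<bar> | e t s. x = EdgePt e t \<and> y = EdgePt e s} \<union>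
      {a + vdist E ends len b c + r | a b c r. (b, a) \<in> exits ends len x \<and> (c, r) \<in> exits ends len y})"

definition is_completion ::
  "'a set \<Rightarrow> ('a \<Rightarrow> 'a \<Rightarrow> real) \<Rightarrow> 'p set \<Rightarrow> ('p \<Rightarrow> 'p \<Rightarrow> real) \<Rightarrow> ('a \<Rightarrow> 'p) \<Rightarrow> bool" where
  "is_completion G d X D \<iota> \<longleftrightarrow>
     Metric_space X D \<and> Metric_space.mcomplete X D \<and> \<iota> ` G \<subseteq> X \<and>
     (\<forall>x\<in>G. \<forall>y\<in>G. D (\<iota> x) (\<iota> y) = d x y) \<and>
     Metric_space.mtopology X D closure_of (\<iota> ` G) = X"

definition totally_disconnected_in :: "'p topology \<Rightarrow> 'p set \<Rightarrow> bool" where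
  "totally_disconnected_in T S \<longleftrightarrow>
     (\<forall>C. C \<subseteq> S \<and> connectedin T C \<longrightarrow> (\<exists>a. C \<subseteq> {a}))"

definition weakly_connected :: "'p topology \<Rightarrow> 'p set \<Rightarrow> bool" where
  "weakly_connected T P \<longleftrightarrow>
     (\<forall>x\<in>topspace T. \<forall>y\<in>topspace T. x \<noteq> y \<longrightarrow>
        (\<exists>W Ux Uy. finite W \<and> W \<subseteq> P \<and> openin T Ux \<and> openin T Uy \<and>
           x \<in> Ux \<and> y \<in> Uy \<and> Ux \<inter> Uy = {} \<and> topspace T - W = Ux \<union> Uy))"

end

theory Submission
  imports Defs
begin

lemma walk_edges: "walk E ends u es w \<Longrightarrow> set es \<subseteq> E"
  by (induction rule: walk.induct) auto

lemma walk_sum_nonneg: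
  fixes len :: "'e \<Rightarrow> real"
  assumes "\<forall>e\<in>E. 0 < len e" "walk E ends u es w"
  shows "0 \<le> sum_list (map len es)"
  using assms(2)
proof induction
  case (walk_Cons e u w es v)
  then have "0 < len e" using assms(1) by blast
  then show ?case using walk_Cons(4) by simp
qed simp

lemma walk_first:
  assumes "walk E ends u es w" "u \<noteq> w"
  shows "\<exists>e es' w'. es = e # es' \<and> e \<in> incident E ends u \<and> walk E ends w' es' w"
  using assms
proof cases
  case walk_Nil then show ?thesis using assms by simp
next
  case (walk_Cons e w' es')
  then have "e \<in> incident E ends u" unfolding incident_def by force
  then show ?thesis using walk_Cons(1,4) by blast
qed

definition gset :: "'e set \<Rightarrow> ('e \<Rightarrow> 'v \<times> 'v) \<Rightarrow> ('e \<Rightarrow> real) \<Rightarrow>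
    ('v, 'e) gpoint \<Rightarrow> ('v, 'e) gpoint \<Rightarrow> real set" where
  "gset E ends len x y =
     ({\<bar>t - s\<bar> | e t s. x = EdgePt e t \<and> y = EdgePt e s} \<union>
      {a + vdist E ends len b c + r | a b c r. (b, a) \<in> exits ends len x \<and> (c, r) \<in> exits ends len y})"

lemma gdist_gset: "gdist E ends len x y = Inf (gset E ends len x y)"
  unfolding gdist_def gset_def ..

definition rad :: "'e set \<Rightarrow> ('e \<Rightarrow> 'v \<times> 'v) \<Rightarrow> ('e \<Rightarrow> real) \<Rightarrow> 'v \<Rightarrow> real" where
  "rad E ends len v = Min (insert 1 ((\<lambda>e. len e / 2) ` incident E ends v))"

locale MG = Metric_space X D for X :: "'p set" and D +
  fixes V :: "'v set" and E :: "'e set" and ends :: "'e \<Rightarrow> 'v \<times> 'v"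
    and len :: "'e \<Rightarrow> real" and B :: "'v set" and \<iota> :: "('v, 'e) gpoint \<Rightarrow> 'p"
  assumes mg: "metric_graph V E ends len B"
    and iota_in: "\<iota> ` gpoints V E len \<subseteq> X"
    and iota_dist: "\<forall>x\<in>gpoints V E len. \<forall>y\<in>gpoints V E len. D (\<iota> x) (\<iota> y) = gdist E ends len x y"
    and iota_dense: "mtopology closure_of (\<iota> ` gpoints V E len) = X"
begin

abbreviation "G \<equiv> gpoints V E len"
abbreviation "vd \<equiv> vdist E ends len"
abbreviation "gd \<equiv> gdist E ends len"

lemma lenpos: "e \<in> E \<Longrightarrow> 0 < len e"
  using mg unfolding metric_graph_def by auto
lemma ends_V: "e \<in> E \<Longrightarrow> fst (ends e) \<in> V \<and> snd (ends e) \<in> V"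
  using mg unfolding metric_graph_def by auto
lemma inc_fin: "v \<in> V \<Longrightarrow> finite (incident E ends v)"
  using mg unfolding metric_graph_def by auto
lemma conn: "u \<in> V \<Longrightarrow> v \<in> V \<Longrightarrow> \<exists>es. walk E ends u es v"
  using mg unfolding metric_graph_def by auto

lemma G_Vert[simp]: "Vert v \<in> G \<longleftrightarrow> v \<in> V"
  unfolding gpoints_def by auto
lemma G_Edge[simp]: "EdgePt e t \<in> G \<longleftrightarrow> e \<in> E \<and> 0 < t \<and> t < len e"
  unfolding gpoints_def by auto

lemma lenpos_all: "\<forall>e\<in>E. 0 < len e"
  using lenpos by blast

lemma vd_le: "walk E ends u es w \<Longrightarrow> vd u w \<le> sum_list (map len es)"
  unfolding vdist_def
proof (rule cInf_lower)
  show "bdd_below {sum_list (map len es) |es. walk E ends u es w}"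
    by (rule bdd_belowI[where m=0]) (auto intro: walk_sum_nonneg[OF lenpos_all])
qed auto

lemma vd_ge:
  assumes "u \<in> V" "w \<in> V" "\<And>es. walk E ends u es w \<Longrightarrow> c \<le> sum_list (map len es)"
  shows "c \<le> vd u w"
proof -
  obtain es where "walk E ends u es w" using conn assms by blast
  then show ?thesis unfolding vdist_def
    by (intro cInf_greatest) (auto intro: assms(3))
qed

lemma vd_nonneg: "u \<in> V \<Longrightarrow> w \<in> V \<Longrightarrow> 0 \<le> vd u w"
  by (rule vd_ge) (auto intro: walk_sum_nonneg[OF lenpos_all])

lemma vd_refl: "u \<in> V \<Longrightarrow> vd u u = 0"
  using vd_le[OF walk_Nil, of u] vd_nonneg[of u u] by simp

lemma vd_edge: "e \<in> E \<Longrightarrow> vd (fst (ends e)) (snd (ends e)) \<le> len e"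
  using vd_le[OF walk_Cons[OF _ _ walk_Nil], of e "fst (ends e)" "snd (ends e)"] by simp

lemma rad_pos: "v \<in> V \<Longrightarrow> 0 < rad E ends len v"
  unfolding rad_def using inc_fin
  by (subst Min_gr_iff) (auto simp: incident_def lenpos)

lemma rad_le: "v \<in> V \<Longrightarrow> e \<in> incident E ends v \<Longrightarrow> rad E ends len v \<le> len e / 2"
  unfolding rad_def using inc_fin by (intro Min_le) auto

lemma vd_far:
  assumes "v \<in> V" "w \<in> V" "v \<noteq> w"
  shows "2 * rad E ends len v \<le> vd v w"
proof (rule vd_ge[OF assms(1,2)])
  fix es assume es: "walk E ends v es w"
  from walk_first[OF es assms(3)] obtain e es' w' where e: "es = e # es'" "e \<in> incident E ends v"
     "walk E ends w' es' w" by blast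
  have "0 \<le> sum_list (map len es')" using walk_sum_nonneg[OF lenpos_all e(3)] .
  moreover have "2 * rad E ends len v \<le> len e" using rad_le[OF assms(1) e(2)] by simp
  ultimately show "2 * rad E ends len v \<le> sum_list (map len es)" using e(1) by simp
qed

lemma exits_G: "x \<in> G \<Longrightarrow> (b, a) \<in> exits ends len x \<Longrightarrow> b \<in> V \<and> 0 \<le> a"
  by (cases x) (auto simp: ends_V gpoints_def)

lemma gset_nonneg:
  assumes "x \<in> G" "y \<in> G" "z \<in> gset E ends len x y" shows "0 \<le> z"
  using assms(3)[unfolded gset_def]
proof (rule UnE)
  assume "z \<in> {\<bar>t - s\<bar> |e t s. x = EdgePt e t \<and> y = EdgePt e s}"
  then show ?thesis by auto
next
  assume "z \<in> {a + vd b c + r |a b c r. (b, a) \<in> exits ends len x \<and> (c, r) \<in> exits ends len y}"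
  then obtain a b c r where B: "z = a + vd b c + r" "(b, a) \<in> exits ends len x" "(c, r) \<in> exits ends len y"
    by blast
  then have "b \<in> V" "0 \<le> a" "c \<in> V" "0 \<le> r" using exits_G[OF assms(1)] exits_G[OF assms(2)] by blast+
  then show ?thesis using B(1) vd_nonneg[of b c] by simp
qed

lemma gset_ne: "gset E ends len x y \<noteq> {}"
proof -
  obtain b a where ba: "(b, a) \<in> exits ends len x" by (cases x) auto
  obtain c r where cr: "(c, r) \<in> exits ends len y" by (cases y) auto
  have "a + vd b c + r \<in> gset E ends len x y" unfolding gset_def using ba cr by blast
  then show ?thesis by blast
qed

lemma gd_le: assumes "x \<in> G" "y \<in> G" "z \<in> gset E ends len x y" shows "gd x y \<le> z"
proof -
  have "bdd_below (gset E ends len x y)"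
    by (rule bdd_belowI[where m=0]) (rule gset_nonneg[OF assms(1,2)])
  then show ?thesis unfolding gdist_gset using assms(3) by (rule cInf_lower[rotated])
qed

lemma gd_lt: "gd x y < r \<Longrightarrow> \<exists>z\<in>gset E ends len x y. z < r"
  unfolding gdist_gset by (rule cInf_lessD[OF gset_ne])

lemma Dgd: "x \<in> G \<Longrightarrow> y \<in> G \<Longrightarrow> D (\<iota> x) (\<iota> y) = gd x y"
  using iota_dist by blast

lemma iota_X: "x \<in> G \<Longrightarrow> \<iota> x \<in> X"
  using iota_in by blast

lemma D_edge_edge:
  assumes "e \<in> E" "0 < t" "t < len e" "0 < s" "s < len e"
  shows "D (\<iota> (EdgePt e t)) (\<iota> (EdgePt e s)) \<le> \<bar>t - s\<bar>"
proof -
  have "\<bar>t - s\<bar> \<in> gset E ends len (EdgePt e t) (EdgePt e s)"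
    unfolding gset_def by blast
  then have "gd (EdgePt e t) (EdgePt e s) \<le> \<bar>t - s\<bar>"
    by (rule gd_le[rotated 2]) (simp_all add: assms)
  then show ?thesis using assms by (simp add: Dgd)
qed

lemma D_fst_edge:
  assumes "e \<in> E" "0 < s" "s < len e"
  shows "D (\<iota> (Vert (fst (ends e)))) (\<iota> (EdgePt e s)) \<le> s"
proof -
  have "0 + vd (fst (ends e)) (fst (ends e)) + s \<in> gset E ends len (Vert (fst (ends e))) (EdgePt e s)"
    unfolding gset_def by simp blast
  then have "gd (Vert (fst (ends e))) (EdgePt e s) \<le> 0 + vd (fst (ends e)) (fst (ends e)) + s"
    by (rule gd_le[rotated 2]) (simp_all add: assms ends_V)
  then show ?thesis using assms ends_V vd_refl by (simp add: Dgd)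
qed

lemma D_snd_edge:
  assumes "e \<in> E" "0 < s" "s < len e"
  shows "D (\<iota> (Vert (snd (ends e)))) (\<iota> (EdgePt e s)) \<le> len e - s"
proof -
  have "0 + vd (snd (ends e)) (snd (ends e)) + (len e - s) \<in> gset E ends len (Vert (snd (ends e))) (EdgePt e s)"
    unfolding gset_def by simp blast
  then have "gd (Vert (snd (ends e))) (EdgePt e s) \<le> 0 + vd (snd (ends e)) (snd (ends e)) + (len e - s)"
    by (rule gd_le[rotated 2]) (simp_all add: assms ends_V)
  then show ?thesis using assms ends_V vd_refl by (simp add: Dgd)
qed

lemma D_fst_snd:
  assumes "e \<in> E"
  shows "D (\<iota> (Vert (fst (ends e)))) (\<iota> (Vert (snd (ends e)))) \<le> len e"
proof -
  have "0 + vd (fst (ends e)) (snd (ends e)) + 0 \<in> gset E ends len (Vert (fst (ends e))) (Vert (snd (ends e)))"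
    unfolding gset_def by simp
  then have "gd (Vert (fst (ends e))) (Vert (snd (ends e))) \<le> 0 + vd (fst (ends e)) (snd (ends e)) + 0"
    using gd_le assms ends_V G_Vert by blast
  then show ?thesis using assms ends_V vd_edge[OF assms] by (simp add: Dgd)
qed


definition emap :: "'e \<Rightarrow> real \<Rightarrow> 'p" where
  "emap e t = (if t \<le> 0 then \<iota> (Vert (fst (ends e))) else if len e \<le> t then \<iota> (Vert (snd (ends e)))
     else \<iota> (EdgePt e t))"

lemma emap_X: "e \<in> E \<Longrightarrow> emap e t \<in> X"
  unfolding emap_def using ends_V by (auto intro!: iota_X)

lemma emap_int: "0 < t \<Longrightarrow> t < len e \<Longrightarrow> emap e t = \<iota> (EdgePt e t)"
  unfolding emap_def by simp

lemma emap_lip: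
  assumes e: "e \<in> E"
  shows "D (emap e s) (emap e t) \<le> \<bar>s - t\<bar>"
proof -
  let ?u = "\<iota> (Vert (fst (ends e)))" and ?w = "\<iota> (Vert (snd (ends e)))"
  have uX: "?u \<in> X" and wX: "?w \<in> X" using ends_V[OF e] iota_X by auto
  have uw: "D ?u ?w \<le> len e" using D_fst_snd[OF e] .
  have lp: "0 < len e" using lenpos[OF e] .
  have fe: "D ?u (\<iota> (EdgePt e x)) \<le> x" if "0 < x" "x < len e" for x
    using D_fst_edge[OF e that] .
  have se: "D ?w (\<iota> (EdgePt e x)) \<le> len e - x" if "0 < x" "x < len e" for x
    using D_snd_edge[OF e that] .
  have ee: "D (\<iota> (EdgePt e x)) (\<iota> (EdgePt e y)) \<le> \<bar>x - y\<bar>" if "0 < x" "x < len e" "0 < y" "y < len e" for x y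
    using D_edge_edge[OF e that] .
  consider "s \<le> 0" | "0 < s" "s < len e" | "len e \<le> s" by linarith
  then show ?thesis
  proof cases
    case 1
    then have es: "emap e s = ?u" unfolding emap_def by simp
    consider "t \<le> 0" | "0 < t" "t < len e" | "len e \<le> t" by linarith
    then show ?thesis
    proof cases
      case 1 then show ?thesis using es uX by (simp add: emap_def)
    next
      case 2 then show ?thesis using es fe[of t] \<open>s \<le> 0\<close> by (simp add: emap_int)
    next
      case 3 then show ?thesis using es uw \<open>s \<le> 0\<close> lp by (simp add: emap_def)
    qed
  next
    case 2
    then have es: "emap e s = \<iota> (EdgePt e s)" by (simp add: emap_int)
    consider "t \<le> 0" | "0 < t" "t < len e" | "len e \<le> t" by linarith
    then show ?thesis
    proof cases
      case 1 then show ?thesis using es fe[of s] 2 by (simp add: emap_def commute)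
    next
      case 3 then show ?thesis using es se[of s] 2 lp by (simp add: emap_def commute)
    next
      case 4: 2 then show ?thesis using es ee[of s t] \<open>0 < s\<close> \<open>s < len e\<close> by (simp add: emap_int)
    qed
  next
    case 3
    then have es: "emap e s = ?w" using lp unfolding emap_def by simp
    consider "t \<le> 0" | "0 < t" "t < len e" | "len e \<le> t" by linarith
    then show ?thesis
    proof cases
      case 1 then show ?thesis using es uw \<open>len e \<le> s\<close> lp by (simp add: emap_def commute)
    next
      case 2 then show ?thesis using es se[of t] \<open>len e \<le> s\<close> by (simp add: emap_int)
    next
      case 4: 3 then show ?thesis using es wX lp by (simp add: emap_def)
    qed
  qed
qed

lemma emap_cont: "e \<in> E \<Longrightarrow> continuous_map euclideanreal mtopology (emap e)"
  unfolding continuous_map_to_metric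
proof (intro ballI allI impI)
  fix x :: real and \<epsilon> :: real assume e: "e \<in> E" and "0 < \<epsilon>"
  show "\<exists>U. openin euclideanreal U \<and> x \<in> U \<and> (\<forall>y\<in>U. emap e y \<in> mball (emap e x) \<epsilon>)"
  proof (intro exI conjI ballI)
    show "openin euclideanreal (ball x \<epsilon>)" by simp
    show "x \<in> ball x \<epsilon>" using \<open>0 < \<epsilon>\<close> by simp
    fix y assume "y \<in> ball x \<epsilon>"
    then have "\<bar>x - y\<bar> < \<epsilon>" by (simp add: dist_real_def)
    then show "emap e y \<in> mball (emap e x) \<epsilon>"
      using emap_lip[OF e, of x y] emap_X[OF e] by simp
  qed
qed

lemma emap_closed: "e \<in> E \<Longrightarrow> closedin mtopology (emap e ` {a..b})"
  by (rule compactin_imp_closedin[OF Hausdorff_space_mtopology])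
     (rule image_compactin[OF _ emap_cont], auto)

lemma closure_trick:
  assumes "p \<in> X" "x0 \<in> X" "D x0 p < \<sigma>" "closedin mtopology C"
    and mem: "\<And>g. g \<in> G \<Longrightarrow> D x0 (\<iota> g) < \<sigma> \<Longrightarrow> \<iota> g \<in> C"
  shows "p \<in> C"
proof -
  let ?S = "\<iota> ` G \<inter> mball x0 \<sigma>"
  have "p \<in> mtopology closure_of ?S"
    unfolding metric_closure_of
  proof (intro CollectI conjI allI impI)
    show "p \<in> X" by fact
    fix \<rho> :: real assume "0 < \<rho>"
    have "p \<in> mtopology closure_of (\<iota> ` G)" using iota_dense assms(1) by simp
    moreover have "0 < min \<rho> (\<sigma> - D x0 p)" using \<open>0 < \<rho>\<close> assms(3) by simp
    ultimately obtain y where y: "y \<in> \<iota> ` G" "y \<in> mball p (min \<rho> (\<sigma> - D x0 p))"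
      unfolding metric_closure_of by blast
    then have "D x0 y \<le> D x0 p + D p y" using assms triangle by auto
    then have "y \<in> mball x0 \<sigma>" using y assms(2) by auto
    then show "\<exists>y\<in>?S. y \<in> mball p \<rho>" using y by auto
  qed
  moreover have "?S \<subseteq> C" using mem by auto
  ultimately show ?thesis using closure_of_minimal[of ?S C] assms(4) by blast
qed

lemma L2G:
  assumes e: "e \<in> E" "0 < t" "t < len e" and g: "g \<in> G"
    and lt: "gd (EdgePt e t) g < r" and r: "r \<le> min t (len e - t)"
  shows "\<exists>s. g = EdgePt e s \<and> \<bar>t - s\<bar> < r"
proof -
  obtain z where z: "z \<in> gset E ends len (EdgePt e t) g" "z < r" using gd_lt[OF lt] by blast
  from z(1)[unfolded gset_def] show ?thesis
  proof (rule UnE)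
    assume "z \<in> {\<bar>t' - s\<bar> |e' t' s. EdgePt e t = EdgePt e' t' \<and> g = EdgePt e' s}"
    then show ?thesis using z(2) by auto
  next
    assume "z \<in> {a + vd b c + r' |a b c r'. (b, a) \<in> exits ends len (EdgePt e t) \<and> (c, r') \<in> exits ends len g}"
    then obtain a b c r' where B: "z = a + vd b c + r'" "(b, a) \<in> exits ends len (EdgePt e t)"
      "(c, r') \<in> exits ends len g" by blast
    have eG: "EdgePt e t \<in> G" using e by simp
    have "b \<in> V" "c \<in> V" "0 \<le> r'" using exits_G[OF eG B(2)] exits_G[OF g B(3)] by auto
    moreover have "a = t \<or> a = len e - t" using B(2) by auto
    ultimately have "r \<le> z" using B(1) vd_nonneg[of b c] r by auto
    then show ?thesis using z(2) by simp
  qed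
qed

lemma L2X:
  assumes e: "e \<in> E" "0 < t" "t < len e" and p: "p \<in> X"
    and lt: "D (\<iota> (EdgePt e t)) p < r" and r: "r \<le> min t (len e - t)"
  shows "\<exists>s. p = \<iota> (EdgePt e s) \<and> \<bar>t - s\<bar> < r \<and> 0 < s \<and> s < len e"
proof -
  define x0 where "x0 = \<iota> (EdgePt e t)"
  define \<sigma> where "\<sigma> = (D x0 p + r) / 2"
  have x0X: "x0 \<in> X" unfolding x0_def using e by (simp add: iota_X)
  have s1: "D x0 p < \<sigma>" "\<sigma> < r" using lt unfolding \<sigma>_def x0_def by auto
  have "p \<in> emap e ` {t - \<sigma>..t + \<sigma>}"
  proof (rule closure_trick[OF p x0X s1(1) emap_closed[OF e(1)]])
    fix g assume g: "g \<in> G" "D x0 (\<iota> g) < \<sigma>"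
    then have "gd (EdgePt e t) g < \<sigma>" unfolding x0_def using e by (simp add: Dgd)
    from L2G[OF e g(1) this] s1 r obtain s where s: "g = EdgePt e s" "\<bar>t - s\<bar> < \<sigma>" by auto
    then have "0 < s" "s < len e" using s1 r by auto
    then have ig: "\<iota> g = emap e s" using s by (simp add: emap_int)
    have "s \<in> {t - \<sigma>..t + \<sigma>}" using s(2) by auto
    then show "\<iota> g \<in> emap e ` {t - \<sigma>..t + \<sigma>}" using ig by blast
  qed
  then obtain s where s: "p = emap e s" "t - \<sigma> \<le> s" "s \<le> t + \<sigma>" by auto
  then have "0 < s" "s < len e" "\<bar>t - s\<bar> < r" using s1 r by auto
  then show ?thesis using s by (auto simp: emap_int)
qed

lemma L1G:
  assumes v: "v \<in> V" and g: "g \<in> G"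
    and lt: "gd (Vert v) g < r" and r: "r \<le> rad E ends len v"
  shows "g = Vert v \<or> (\<exists>e s. e \<in> E \<and> 0 < s \<and> s < len e \<and> g = EdgePt e s \<and>
            ((fst (ends e) = v \<and> s < r) \<or> (snd (ends e) = v \<and> len e - s < r)))"
proof -
  obtain z where z: "z \<in> gset E ends len (Vert v) g" "z < r" using gd_lt[OF lt] by blast
  from z(1)[unfolded gset_def] show ?thesis
  proof (rule UnE)
    assume "z \<in> {\<bar>t' - s\<bar> |e' t' s. Vert v = EdgePt e' t' \<and> g = EdgePt e' s}"
    then show ?thesis by auto
  next
    assume "z \<in> {a + vd b c + r' |a b c r'. (b, a) \<in> exits ends len (Vert v) \<and> (c, r') \<in> exits ends len g}"
    then obtain a b c r' where B: "z = a + vd b c + r'" "(b, a) \<in> exits ends len (Vert v)"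
      "(c, r') \<in> exits ends len g" by blast
    have ba: "b = v" "a = 0" using B(2) by auto
    have c: "c \<in> V" "0 \<le> r'" using exits_G[OF g B(3)] by auto
    have cv: "c = v"
    proof (rule ccontr)
      assume "c \<noteq> v"
      then have "2 * rad E ends len v \<le> vd v c" using vd_far[OF v c(1)] by simp
      moreover have "0 < rad E ends len v" using rad_pos[OF v] .
      ultimately have "r \<le> z" using B(1) ba c r by auto
      then show False using z(2) by simp
    qed
    then have "z = r'" using B(1) ba vd_refl[OF v] by simp
    then have r'r: "r' < r" using z(2) by simp
    show ?thesis
    proof (cases g)
      case (Vert w)
      then show ?thesis using B(3) cv by simp
    next
      case (EdgePt e s)
      then have "e \<in> E" "0 < s" "s < len e" using g by auto
      moreover have "(fst (ends e) = v \<and> s < r) \<or> (snd (ends e) = v \<and> len e - s < r)"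
        using B(3) cv r'r EdgePt by auto
      ultimately show ?thesis using EdgePt by blast
    qed
  qed
qed

lemma L1X:
  assumes v: "v \<in> V" and p: "p \<in> X"
    and lt: "D (\<iota> (Vert v)) p < r" and r: "r \<le> rad E ends len v"
  shows "p = \<iota> (Vert v) \<or> (\<exists>e s. e \<in> E \<and> 0 < s \<and> s < len e \<and> p = \<iota> (EdgePt e s) \<and>
            ((fst (ends e) = v \<and> s < r) \<or> (snd (ends e) = v \<and> len e - s < r)))"
proof -
  define x0 where "x0 = \<iota> (Vert v)"
  define \<sigma> where "\<sigma> = (D x0 p + r) / 2"
  have x0X: "x0 \<in> X" unfolding x0_def using v by (simp add: iota_X)
  have s1: "D x0 p < \<sigma>" "\<sigma> < r" using lt unfolding \<sigma>_def x0_def by auto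
  have s0: "0 < \<sigma>" using s1 nonneg[of x0 p] by linarith
  define C where "C = mcball x0 0 \<union> (\<Union>e\<in>incident E ends v.
      (if fst (ends e) = v then emap e ` {0..\<sigma>} else {}) \<union>
      (if snd (ends e) = v then emap e ` {len e - \<sigma>..len e} else {}))"
  have incE: "e \<in> incident E ends v \<Longrightarrow> e \<in> E" for e unfolding incident_def by auto
  have sl: "\<sigma> < len e / 2" if "e \<in> incident E ends v" for e
    using rad_le[OF v that] s1 r by linarith
  have Cc: "closedin mtopology C"
    unfolding C_def
    by (intro closedin_Un closedin_Union)
       (auto simp: inc_fin[OF v] incE intro!: emap_closed closedin_Un)
  have "p \<in> C"
  proof (rule closure_trick[OF p x0X s1(1) Cc])
    fix g assume g: "g \<in> G" "D x0 (\<iota> g) < \<sigma>"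
    then have "gd (Vert v) g < \<sigma>" unfolding x0_def using v by (simp add: Dgd)
    from L1G[OF v g(1) this] s1 r
    have "g = Vert v \<or> (\<exists>e s. e \<in> E \<and> 0 < s \<and> s < len e \<and> g = EdgePt e s \<and>
            ((fst (ends e) = v \<and> s < \<sigma>) \<or> (snd (ends e) = v \<and> len e - s < \<sigma>)))" by auto
    then show "\<iota> g \<in> C"
    proof
      assume "g = Vert v" then show ?thesis unfolding C_def x0_def using x0X x0_def by auto
    next
      assume "\<exists>e s. e \<in> E \<and> 0 < s \<and> s < len e \<and> g = EdgePt e s \<and>
            ((fst (ends e) = v \<and> s < \<sigma>) \<or> (snd (ends e) = v \<and> len e - s < \<sigma>))"
      then obtain e s where es: "e \<in> E" "0 < s" "s < len e" "g = EdgePt e s"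
        and "(fst (ends e) = v \<and> s < \<sigma>) \<or> (snd (ends e) = v \<and> len e - s < \<sigma>)" by blast
      then have inc: "e \<in> incident E ends v" unfolding incident_def by auto
      have ig: "\<iota> g = emap e s" using es by (simp add: emap_int)
      from \<open>(fst (ends e) = v \<and> s < \<sigma>) \<or> _\<close> show ?thesis
      proof
        assume h: "fst (ends e) = v \<and> s < \<sigma>"
        then have "s \<in> {0..\<sigma>}" using es by auto
        then have "\<iota> g \<in> (if fst (ends e) = v then emap e ` {0..\<sigma>} else {})" using h ig by simp
        then show ?thesis unfolding C_def using inc by blast
      next
        assume h: "snd (ends e) = v \<and> len e - s < \<sigma>"
        then have "s \<in> {len e - \<sigma>..len e}" using es by auto
        then have "\<iota> g \<in> (if snd (ends e) = v then emap e ` {len e - \<sigma>..len e} else {})" using h ig by simp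
        then show ?thesis unfolding C_def using inc by blast
      qed
    qed
  qed
  then consider "p \<in> mcball x0 0"
    | e where "e \<in> incident E ends v" "p \<in> (if fst (ends e) = v then emap e ` {0..\<sigma>} else {})"
    | e where "e \<in> incident E ends v" "p \<in> (if snd (ends e) = v then emap e ` {len e - \<sigma>..len e} else {})"
    unfolding C_def by blast
  then consider "p \<in> mcball x0 0"
    | e s where "e \<in> incident E ends v" "fst (ends e) = v" "p = emap e s" "0 \<le> s" "s \<le> \<sigma>"
    | e s where "e \<in> incident E ends v" "snd (ends e) = v" "p = emap e s" "len e - \<sigma> \<le> s" "s \<le> len e"
  proof cases
    case 1 then show thesis using that(1) by blast
  next
    case (2 e)
    then have "fst (ends e) = v" "p \<in> emap e ` {0..\<sigma>}" by (simp_all split: if_splits)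
    then show thesis using that(2)[OF 2(1)] by auto
  next
    case (3 e)
    then have "snd (ends e) = v" "p \<in> emap e ` {len e - \<sigma>..len e}" by (simp_all split: if_splits)
    then show thesis using that(3)[OF 3(1)] by auto
  qed
  then show ?thesis
  proof cases
    case 1
    then have "D x0 p = 0" using nonneg[of x0 p] by auto
    then have "p = x0" using x0X p zero by auto
    then show ?thesis unfolding x0_def by simp
  next
    case (2 e s)
    have eE: "e \<in> E" using incE[OF 2(1)] .
    show ?thesis
    proof (cases "s = 0")
      case True then show ?thesis using 2 by (simp add: emap_def)
    next
      case False
      then have sp: "0 < s" "s < len e" using 2 sl[OF 2(1)] lenpos[OF eE] by auto
      then have "p = \<iota> (EdgePt e s)" using 2 by (simp add: emap_int)
      moreover have "s < r" using 2 s1 by linarith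
      ultimately show ?thesis using 2(2) eE sp by blast
    qed
  next
    case (3 e s)
    have eE: "e \<in> E" using incE[OF 3(1)] .
    show ?thesis
    proof (cases "s = len e")
      case True then show ?thesis using 3 lenpos[OF eE] by (simp add: emap_def)
    next
      case False
      then have sp: "0 < s" "s < len e" using 3 sl[OF 3(1)] lenpos[OF eE] by auto
      then have "p = \<iota> (EdgePt e s)" using 3 by (simp add: emap_int)
      moreover have "len e - s < r" using 3 s1 by linarith
      ultimately show ?thesis using 3(2) eE sp by blast
    qed
  qed
qed


definition good :: "'p set \<Rightarrow> bool" where
  "good U \<longleftrightarrow> openin mtopology U \<and> finite (mtopology closure_of U - U) \<and>
     mtopology closure_of U - U \<subseteq> \<iota> ` G"

lemma good_Union:
  assumes "finite F" "\<And>U. U \<in> F \<Longrightarrow> good U"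
  shows "good (\<Union>F)"
proof -
  have cl: "mtopology closure_of (\<Union>F) = (\<Union>U\<in>F. mtopology closure_of U)"
    using closure_of_Union[OF assms(1)] .
  have sub: "mtopology closure_of (\<Union>F) - \<Union>F \<subseteq> (\<Union>U\<in>F. mtopology closure_of U - U)"
    unfolding cl by blast
  have "finite (\<Union>U\<in>F. mtopology closure_of U - U)"
    using assms unfolding good_def by auto
  moreover have "(\<Union>U\<in>F. mtopology closure_of U - U) \<subseteq> \<iota> ` G"
    using assms unfolding good_def by auto
  moreover have "openin mtopology (\<Union>F)" using assms unfolding good_def by auto
  ultimately show ?thesis using sub unfolding good_def by (meson finite_subset order_trans)
qed

lemma good_compl:
  assumes "good U"
  shows "good (X - mtopology closure_of U)"
proof -
  have oU: "openin mtopology U" using assms good_def by blast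
  have o: "openin mtopology (X - mtopology closure_of U)"
    by (metis closedin_closure_of openin_diff openin_topspace topspace_mtopology)
  have "closedin mtopology (X - U)"
    by (metis closedin_diff closedin_topspace oU topspace_mtopology)
  moreover have "X - mtopology closure_of U \<subseteq> X - U"
    using closure_of_subset[of U mtopology] oU openin_subset by fastforce
  ultimately have c: "mtopology closure_of (X - mtopology closure_of U) \<subseteq> X - U"
    by (rule closure_of_minimal[rotated])
  have "mtopology closure_of (X - mtopology closure_of U) - (X - mtopology closure_of U)
        \<subseteq> mtopology closure_of U - U"
    using c by blast
  then show ?thesis using assms o unfolding good_def by (meson finite_subset order_trans)
qed

lemma good_edge:
  assumes e: "e \<in> E" "0 < t" "t < len e" and \<epsilon>: "0 < \<epsilon>"
  shows "\<exists>U. good U \<and> \<iota> (EdgePt e t) \<in> U \<and> mtopology closure_of U \<subseteq> mcball (\<iota> (EdgePt e t)) \<epsilon>"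
proof -
  define \<rho> where "\<rho> = min t (len e - t)"
  define r where "r = min \<epsilon> \<rho> / 2"
  have r: "0 < r" "r < \<rho>" "r \<le> \<epsilon>" using e \<epsilon> unfolding r_def \<rho>_def by auto
  define U where "U = (\<lambda>s. \<iota> (EdgePt e s)) ` {s. \<bar>s - t\<bar> < r}"
  have Uint: "0 < s \<and> s < len e" if "\<bar>s - t\<bar> \<le> r" for s
    using that r unfolding \<rho>_def by auto
  have UX: "U \<subseteq> X" unfolding U_def using Uint e by (auto intro!: iota_X)
  have oU: "openin mtopology U"
    unfolding openin_mtopology
  proof (intro conjI allI impI UX)
    fix q assume "q \<in> U"
    then obtain s where s: "q = \<iota> (EdgePt e s)" "\<bar>s - t\<bar> < r" unfolding U_def by auto
    have si: "0 < s" "s < len e" using Uint[of s] s(2) by auto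
    define r' where "r' = min (min s (len e - s)) (r - \<bar>s - t\<bar>)"
    have r': "0 < r'" unfolding r'_def using si s(2) by auto
    have "mball q r' \<subseteq> U"
    proof
      fix y assume "y \<in> mball q r'"
      then have y: "y \<in> X" "D (\<iota> (EdgePt e s)) y < r'" using s by auto
      have "r' \<le> min s (len e - s)" unfolding r'_def by (auto simp: min_le_iff_disj)
      from L2X[OF e(1) si y this] obtain s' where s': "y = \<iota> (EdgePt e s')" "\<bar>s - s'\<bar> < r'"
        by blast
      then have "\<bar>s' - t\<bar> < r" unfolding r'_def by auto
      then show "y \<in> U" unfolding U_def using s' by auto
    qed
    then show "\<exists>r>0. mball q r \<subseteq> U" using r' by blast
  qed
  define C where "C = emap e ` {t - r..t + r}"
  have Cc: "closedin mtopology C" unfolding C_def by (rule emap_closed[OF e(1)])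
  have UC: "U \<subseteq> C"
  proof
    fix q assume "q \<in> U"
    then obtain s where s: "q = \<iota> (EdgePt e s)" "\<bar>s - t\<bar> < r" unfolding U_def by auto
    then have "q = emap e s" using Uint[of s] by (simp add: emap_int)
    moreover have "s \<in> {t - r..t + r}" using s by auto
    ultimately show "q \<in> C" unfolding C_def by blast
  qed
  have clC: "mtopology closure_of U \<subseteq> C" using closure_of_minimal[OF UC Cc] .
  have fr: "C - U \<subseteq> {\<iota> (EdgePt e (t - r)), \<iota> (EdgePt e (t + r))}"
  proof
    fix q assume q: "q \<in> C - U"
    then obtain s where s: "q = emap e s" "t - r \<le> s" "s \<le> t + r" unfolding C_def by auto
    have si: "0 < s" "s < len e" using Uint[of s] s by auto
    have "\<not> \<bar>s - t\<bar> < r"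
    proof
      assume "\<bar>s - t\<bar> < r"
      then have "q \<in> U" unfolding U_def using s si by (auto simp: emap_int)
      then show False using q by blast
    qed
    then have "s = t - r \<or> s = t + r" using s by auto
    then show "q \<in> {\<iota> (EdgePt e (t - r)), \<iota> (EdgePt e (t + r))}" using s si by (auto simp: emap_int)
  qed
  have frG: "{\<iota> (EdgePt e (t - r)), \<iota> (EdgePt e (t + r))} \<subseteq> \<iota> ` G"
    using Uint[of "t - r"] Uint[of "t + r"] e r by auto
  have good: "good U" unfolding good_def
    using oU clC fr frG by (meson Diff_mono finite.emptyI finite_insert finite_subset order_refl order_trans)
  have x0: "\<iota> (EdgePt e t) \<in> U" unfolding U_def using r by auto
  have "C \<subseteq> mcball (\<iota> (EdgePt e t)) \<epsilon>"
  proof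
    fix q assume "q \<in> C"
    then obtain s where s: "q = emap e s" "t - r \<le> s" "s \<le> t + r" unfolding C_def by auto
    have "D (emap e t) (emap e s) \<le> \<bar>t - s\<bar>" by (rule emap_lip[OF e(1)])
    moreover have "emap e t = \<iota> (EdgePt e t)" using e by (simp add: emap_int)
    ultimately show "q \<in> mcball (\<iota> (EdgePt e t)) \<epsilon>"
      using s r emap_X[OF e(1)] e by (auto simp: iota_X)
  qed
  then show ?thesis using good x0 clC by blast
qed

definition cstar :: "'v \<Rightarrow> real \<Rightarrow> 'p set" where
  "cstar v \<sigma> = mcball (\<iota> (Vert v)) 0 \<union> (\<Union>e\<in>incident E ends v.
      (if fst (ends e) = v then emap e ` {0..\<sigma>} else {}) \<union>
      (if snd (ends e) = v then emap e ` {len e - \<sigma>..len e} else {}))"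

lemma incE: "e \<in> incident E ends v \<Longrightarrow> e \<in> E"
  unfolding incident_def by auto

lemma cstar_closed: "v \<in> V \<Longrightarrow> closedin mtopology (cstar v \<sigma>)"
  unfolding cstar_def
  by (intro closedin_Un closedin_Union)
     (auto simp: inc_fin incE intro!: emap_closed closedin_Un)

lemma cstar_center: "v \<in> V \<Longrightarrow> \<iota> (Vert v) \<in> cstar v \<sigma>"
  unfolding cstar_def using iota_X[of "Vert v"] by auto

lemma cstar_fst: "e \<in> E \<Longrightarrow> fst (ends e) = v \<Longrightarrow> 0 < s \<Longrightarrow> s \<le> \<sigma> \<Longrightarrow> s < len e \<Longrightarrow>
   \<iota> (EdgePt e s) \<in> cstar v \<sigma>"
proof -
  assume h: "e \<in> E" "fst (ends e) = v" "0 < s" "s \<le> \<sigma>" "s < len e"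
  then have inc: "e \<in> incident E ends v" unfolding incident_def by auto
  have "s \<in> {0..\<sigma>}" using h by auto
  moreover have "emap e s = \<iota> (EdgePt e s)" using h by (simp add: emap_int)
  ultimately have "\<iota> (EdgePt e s) \<in> emap e ` {0..\<sigma>}" by (metis image_eqI)
  then have "\<iota> (EdgePt e s) \<in> (if fst (ends e) = v then emap e ` {0..\<sigma>} else {})"
    using h by simp
  then show ?thesis unfolding cstar_def using inc by blast
qed

lemma cstar_snd: "e \<in> E \<Longrightarrow> snd (ends e) = v \<Longrightarrow> 0 < s \<Longrightarrow> len e - s \<le> \<sigma> \<Longrightarrow> s < len e \<Longrightarrow>
   \<iota> (EdgePt e s) \<in> cstar v \<sigma>"
proof -
  assume h: "e \<in> E" "snd (ends e) = v" "0 < s" "len e - s \<le> \<sigma>" "s < len e"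
  then have inc: "e \<in> incident E ends v" unfolding incident_def by auto
  have "s \<in> {len e - \<sigma>..len e}" using h by auto
  moreover have "emap e s = \<iota> (EdgePt e s)" using h by (simp add: emap_int)
  ultimately have "\<iota> (EdgePt e s) \<in> emap e ` {len e - \<sigma>..len e}" by (metis image_eqI)
  then have "\<iota> (EdgePt e s) \<in> (if snd (ends e) = v then emap e ` {len e - \<sigma>..len e} else {})"
    using h by simp
  then show ?thesis unfolding cstar_def using inc by blast
qed

lemma cstar_cases:
  assumes v: "v \<in> V" and p: "p \<in> cstar v \<sigma>" and \<sigma>: "\<sigma> < rad E ends len v"
  shows "p = \<iota> (Vert v) \<or> (\<exists>e s. e \<in> incident E ends v \<and> 0 < s \<and> s < len e \<and> p = \<iota> (EdgePt e s) \<and>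
            ((fst (ends e) = v \<and> s \<le> \<sigma>) \<or> (snd (ends e) = v \<and> len e - s \<le> \<sigma>)))"
proof -
  let ?x0 = "\<iota> (Vert v)"
  have x0X: "?x0 \<in> X" using v by (simp add: iota_X)
  have sl: "\<sigma> < len e / 2" if "e \<in> incident E ends v" for e
    using rad_le[OF v that] \<sigma> by linarith
  from p consider "p \<in> mcball ?x0 0"
    | e where "e \<in> incident E ends v" "p \<in> (if fst (ends e) = v then emap e ` {0..\<sigma>} else {})"
    | e where "e \<in> incident E ends v" "p \<in> (if snd (ends e) = v then emap e ` {len e - \<sigma>..len e} else {})"
    unfolding cstar_def by blast
  then show ?thesis
  proof cases
    case 1
    then have "D ?x0 p = 0" using nonneg[of ?x0 p] by auto
    then have "p = ?x0" using x0X 1 zero by auto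
    then show ?thesis by simp
  next
    case (2 e)
    then have f: "fst (ends e) = v" "p \<in> emap e ` {0..\<sigma>}" by (simp_all split: if_splits)
    then obtain s where s: "p = emap e s" "0 \<le> s" "s \<le> \<sigma>" by auto
    have eE: "e \<in> E" using incE[OF 2(1)] .
    show ?thesis
    proof (cases "s = 0")
      case True then show ?thesis using s f by (simp add: emap_def)
    next
      case False
      then have sp: "0 < s" "s < len e" using s sl[OF 2(1)] lenpos[OF eE] by auto
      then have "p = \<iota> (EdgePt e s)" using s by (simp add: emap_int)
      then show ?thesis using 2(1) f s sp by blast
    qed
  next
    case (3 e)
    then have f: "snd (ends e) = v" "p \<in> emap e ` {len e - \<sigma>..len e}" by (simp_all split: if_splits)
    then obtain s where s: "p = emap e s" "len e - \<sigma> \<le> s" "s \<le> len e" by auto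
    have eE: "e \<in> E" using incE[OF 3(1)] .
    show ?thesis
    proof (cases "s = len e")
      case True then show ?thesis using s f lenpos[OF eE] by (simp add: emap_def)
    next
      case False
      then have sp: "0 < s" "s < len e" using s sl[OF 3(1)] lenpos[OF eE] by auto
      then have "p = \<iota> (EdgePt e s)" using s by (simp add: emap_int)
      moreover have "len e - s \<le> \<sigma>" using s by simp
      ultimately show ?thesis using 3(1) f sp by blast
    qed
  qed
qed

lemma good_vertex:
  assumes v: "v \<in> V" and \<epsilon>: "0 < \<epsilon>"
  shows "\<exists>U. good U \<and> \<iota> (Vert v) \<in> U \<and> mtopology closure_of U \<subseteq> mcball (\<iota> (Vert v)) \<epsilon>"
proof -
  define x0 where "x0 = \<iota> (Vert v)"
  have x0X: "x0 \<in> X" unfolding x0_def using v by (simp add: iota_X)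
  define r where "r = min \<epsilon> (rad E ends len v) / 2"
  have r: "0 < r" "r < rad E ends len v" "r \<le> \<epsilon>" using \<epsilon> rad_pos[OF v] unfolding r_def by auto
  have rl: "r < len e" if "e \<in> incident E ends v" for e
    using rad_le[OF v that] r lenpos[OF incE[OF that]] by linarith
  define P where "P = (\<lambda>e s. e \<in> E \<and> 0 < s \<and> s < len e \<and>
       ((fst (ends e) = v \<and> s < r) \<or> (snd (ends e) = v \<and> len e - s < r)))"
  define U where "U = insert x0 {\<iota> (EdgePt e s) | e s. P e s}"
  have UX: "U \<subseteq> X" unfolding U_def P_def using x0X by (auto intro!: iota_X)
  have oU: "openin mtopology U"
    unfolding openin_mtopology
  proof (intro conjI allI impI UX)
    fix q assume "q \<in> U"
    then consider "q = x0" | e s where "q = \<iota> (EdgePt e s)" "P e s" unfolding U_def by blast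
    then show "\<exists>r>0. mball q r \<subseteq> U"
    proof cases
      case 1
      have "mball q r \<subseteq> U"
      proof
        fix y assume "y \<in> mball q r"
        then have y: "y \<in> X" "D (\<iota> (Vert v)) y < r" using 1 x0_def by auto
        from L1X[OF v y(1) y(2)] r show "y \<in> U" unfolding U_def P_def x0_def by auto
      qed
      then show ?thesis using r by blast
    next
      case (2 e s)
      have si: "e \<in> E" "0 < s" "s < len e" using 2 unfolding P_def by auto
      define r' where "r' = min (min s (len e - s)) (if fst (ends e) = v \<and> s < r then r - s else r - (len e - s))"
      have r': "0 < r'" unfolding r'_def using si 2(2) unfolding P_def by auto
      have "mball q r' \<subseteq> U"
      proof
        fix y assume "y \<in> mball q r'"
        then have y: "y \<in> X" "D (\<iota> (EdgePt e s)) y < r'" using 2 by auto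
        have "r' \<le> min s (len e - s)" unfolding r'_def by (auto simp: min_le_iff_disj)
        from L2X[OF si y this] obtain s' where s': "y = \<iota> (EdgePt e s')" "\<bar>s - s'\<bar> < r'" "0 < s'" "s' < len e"
          by blast
        have "P e s'"
        proof (cases "fst (ends e) = v \<and> s < r")
          case True
          then have "s' < r" using s'(2) unfolding r'_def by auto
          then show ?thesis unfolding P_def using True si s' by auto
        next
          case False
          then have "snd (ends e) = v" "len e - s < r" using 2(2) unfolding P_def by auto
          moreover have "len e - s' < r" using s'(2) False calculation unfolding r'_def by auto
          ultimately show ?thesis unfolding P_def using si s' by auto
        qed
        then show "y \<in> U" unfolding U_def using s' by auto
      qed
      then show ?thesis using r' by blast
    qed
  qed
  define C where "C = cstar v r"
  have Cc: "closedin mtopology C" unfolding C_def by (rule cstar_closed[OF v])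
  have UC: "U \<subseteq> C"
  proof
    fix q assume "q \<in> U"
    then consider "q = x0" | e s where "q = \<iota> (EdgePt e s)" "P e s" unfolding U_def by blast
    then show "q \<in> C"
    proof cases
      case 1 then show ?thesis unfolding C_def x0_def using cstar_center[OF v] by simp
    next
      case (2 e s)
      then show ?thesis unfolding C_def P_def using cstar_fst cstar_snd by auto
    qed
  qed
  have clC: "mtopology closure_of U \<subseteq> C" using closure_of_minimal[OF UC Cc] .
  define FF where "FF = (\<lambda>e. \<iota> (EdgePt e r)) ` incident E ends v \<union> (\<lambda>e. \<iota> (EdgePt e (len e - r))) ` incident E ends v"
  have FFf: "finite FF" unfolding FF_def using inc_fin[OF v] by simp
  have FFG: "FF \<subseteq> \<iota> ` G" unfolding FF_def using rl r incE by (auto intro!: imageI)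
  have fr: "C - U \<subseteq> FF"
  proof
    fix q assume q: "q \<in> C - U"
    from cstar_cases[OF v _ r(2), of q] q have
      "q = x0 \<or> (\<exists>e s. e \<in> incident E ends v \<and> 0 < s \<and> s < len e \<and> q = \<iota> (EdgePt e s) \<and>
            ((fst (ends e) = v \<and> s \<le> r) \<or> (snd (ends e) = v \<and> len e - s \<le> r)))"
      unfolding C_def x0_def by blast
    moreover have "q \<noteq> x0" using q unfolding U_def by auto
    ultimately obtain e s where es: "e \<in> incident E ends v" "0 < s" "s < len e" "q = \<iota> (EdgePt e s)"
        "(fst (ends e) = v \<and> s \<le> r) \<or> (snd (ends e) = v \<and> len e - s \<le> r)" by blast
    have "\<not> P e s" using q es(4) unfolding U_def by auto
    then have "s = r \<or> s = len e - r" using es incE[OF es(1)] unfolding P_def by auto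
    then show "q \<in> FF" unfolding FF_def using es by auto
  qed
  have good: "good U" unfolding good_def
    using oU clC fr FFf FFG by (meson Diff_mono finite_subset order_refl order_trans)
  have x0U: "x0 \<in> U" unfolding U_def by simp
  have "C \<subseteq> mcball x0 \<epsilon>"
  proof
    fix q assume "q \<in> C"
    from cstar_cases[OF v this[unfolded C_def] r(2)] show "q \<in> mcball x0 \<epsilon>"
    proof
      assume "q = \<iota> (Vert v)" then show ?thesis using x0X \<epsilon> unfolding x0_def by simp
    next
      assume "\<exists>e s. e \<in> incident E ends v \<and> 0 < s \<and> s < len e \<and> q = \<iota> (EdgePt e s) \<and>
            ((fst (ends e) = v \<and> s \<le> r) \<or> (snd (ends e) = v \<and> len e - s \<le> r))"
      then obtain e s where es: "e \<in> incident E ends v" "0 < s" "s < len e" "q = \<iota> (EdgePt e s)"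
        "(fst (ends e) = v \<and> s \<le> r) \<or> (snd (ends e) = v \<and> len e - s \<le> r)" by blast
      have eE: "e \<in> E" using incE[OF es(1)] .
      have qe: "q = emap e s" using es by (simp add: emap_int)
      have qX: "q \<in> X" using es eE by (simp add: iota_X)
      from es(5) show ?thesis
      proof
        assume h: "fst (ends e) = v \<and> s \<le> r"
        have "emap e 0 = x0" using h unfolding x0_def by (simp add: emap_def)
        then have "D x0 q \<le> \<bar>0 - s\<bar>" using emap_lip[OF eE, of 0 s] qe by simp
        then show ?thesis using h es r x0X qX by simp
      next
        assume h: "snd (ends e) = v \<and> len e - s \<le> r"
        have "emap e (len e) = x0" using h lenpos[OF eE] unfolding x0_def by (simp add: emap_def)
        then have "D x0 q \<le> \<bar>len e - s\<bar>" using emap_lip[OF eE, of "len e" s] qe by simp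
        then show ?thesis using h es r x0X qX by simp
      qed
    qed
  qed
  then show ?thesis using good x0U clC unfolding x0_def by blast
qed

lemma good_point:
  assumes "p \<in> \<iota> ` G" "0 < \<epsilon>"
  shows "\<exists>U. good U \<and> p \<in> U \<and> mtopology closure_of U \<subseteq> mcball p \<epsilon>"
proof -
  obtain g where g: "g \<in> G" "p = \<iota> g" using assms by blast
  show ?thesis
  proof (cases g)
    case (Vert v) then show ?thesis using good_vertex[OF _ assms(2)] g by auto
  next
    case (EdgePt e t) then show ?thesis using good_edge[OF _ _ _ assms(2)] g by auto
  qed
qed


lemma B_V: "B \<subseteq> V"
  using mg unfolding metric_graph_def by auto

lemma Gint_open: "openin mtopology (\<iota> ` (G - Vert ` B))"
  unfolding openin_mtopology
proof (intro conjI allI impI)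
  show "\<iota> ` (G - Vert ` B) \<subseteq> X" using iota_in by blast
  fix q assume "q \<in> \<iota> ` (G - Vert ` B)"
  then obtain g where g: "g \<in> G" "g \<notin> Vert ` B" "q = \<iota> g" by blast
  show "\<exists>r>0. mball q r \<subseteq> \<iota> ` (G - Vert ` B)"
  proof (cases g)
    case (Vert v)
    then have v: "v \<in> V" "v \<notin> B" using g by auto
    have "mball q (rad E ends len v) \<subseteq> \<iota> ` (G - Vert ` B)"
    proof
      fix y assume "y \<in> mball q (rad E ends len v)"
      then have y: "y \<in> X" "D (\<iota> (Vert v)) y < rad E ends len v" using g Vert by auto
      from L1X[OF v(1) y order_refl] consider "y = \<iota> (Vert v)"
        | e s where "e \<in> E" "0 < s" "s < len e" "y = \<iota> (EdgePt e s)" by blast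
      then show "y \<in> \<iota> ` (G - Vert ` B)"
      proof cases
        case 1 then show ?thesis using v by auto
      next
        case (2 e s) then show ?thesis by auto
      qed
    qed
    then show ?thesis using rad_pos[OF v(1)] by blast
  next
    case (EdgePt e t)
    then have e: "e \<in> E" "0 < t" "t < len e" using g by auto
    have "mball q (min t (len e - t)) \<subseteq> \<iota> ` (G - Vert ` B)"
    proof
      fix y assume "y \<in> mball q (min t (len e - t))"
      then have y: "y \<in> X" "D (\<iota> (EdgePt e t)) y < min t (len e - t)" using g EdgePt by auto
      from L2X[OF e y order_refl] obtain s where "y = \<iota> (EdgePt e s)" "0 < s" "s < len e" by blast
      then show "y \<in> \<iota> ` (G - Vert ` B)" using e by auto
    qed
    moreover have "0 < min t (len e - t)" using e by simp
    ultimately show ?thesis by blast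
  qed
qed

lemma Bd_closed: "closedin mtopology (X - \<iota> ` (G - Vert ` B))"
  by (metis Gint_open closedin_diff closedin_topspace topspace_mtopology)

lemma isolated:
  assumes v: "v \<in> V" and p: "p \<in> X - \<iota> ` (G - Vert ` B)" and d: "D (\<iota> (Vert v)) p < rad E ends len v"
  shows "p = \<iota> (Vert v)"
proof -
  have pX: "p \<in> X" using p by blast
  from L1X[OF v pX d order_refl] consider "p = \<iota> (Vert v)"
    | e s where "e \<in> E" "0 < s" "s < len e" "p = \<iota> (EdgePt e s)" by blast
  then show ?thesis
  proof cases
    case (2 e s) then show ?thesis using p by auto
  qed simp
qed

lemma sep:
  assumes cpt: "compact_space mtopology"
    and td: "totally_disconnected_in mtopology (X - \<iota> ` (G - Vert ` B))"
    and xy: "x \<in> X" "y \<in> X" "x \<noteq> y"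
  shows "\<exists>U. good U \<and> x \<in> U \<and> y \<notin> mtopology closure_of U"
proof -
  have dxy: "0 < D x y" using xy mdist_pos_less by blast
  consider "x \<in> \<iota> ` G" | "y \<in> \<iota> ` G" | "x \<notin> \<iota> ` G" "y \<notin> \<iota> ` G" by blast
  then show ?thesis
  proof cases
    case 1
    from good_point[OF 1, of "D x y / 2"] dxy obtain U where
      U: "good U" "x \<in> U" "mtopology closure_of U \<subseteq> mcball x (D x y / 2)" by auto
    have "y \<notin> mcball x (D x y / 2)" using dxy by auto
    then show ?thesis using U by blast
  next
    case 2
    from good_point[OF 2, of "D x y / 2"] dxy obtain U' where
      U': "good U'" "y \<in> U'" "mtopology closure_of U' \<subseteq> mcball y (D x y / 2)" by auto
    have "x \<notin> mcball y (D x y / 2)" using dxy commute[of x y] by auto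
    then have xn: "x \<notin> mtopology closure_of U'" using U' by blast
    have oU': "openin mtopology U'" using U' good_def by blast
    have "closedin mtopology (X - U')"
      by (metis closedin_diff closedin_topspace oU' topspace_mtopology)
    moreover have "X - mtopology closure_of U' \<subseteq> X - U'"
      using closure_of_subset[of U' mtopology] oU' openin_subset by fastforce
    ultimately have "mtopology closure_of (X - mtopology closure_of U') \<subseteq> X - U'"
      by (rule closure_of_minimal[rotated])
    then show ?thesis using good_compl[OF U'(1)] xn xy U'(2) by blast
  next
    case 3
    let ?Bd = "X - \<iota> ` (G - Vert ` B)"
    have xB: "x \<in> ?Bd" and yB: "y \<in> ?Bd" using 3 xy by auto
    let ?T = "subtopology mtopology ?Bd"
    have tT: "topspace ?T = ?Bd" by auto
    have cT: "compact_space ?T"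
      by (rule compact_space_subtopology[OF closedin_compact_space[OF cpt Bd_closed]])
    have hT: "Hausdorff_space ?T"
      by (rule Hausdorff_space_subtopology[OF Hausdorff_space_mtopology])
    have "separated_between ?T {x} {y}"
    proof (rule cut_wire_fence_theorem_gen[OF cT])
      show "Hausdorff_space ?T \<or> regular_space ?T \<or> normal_space ?T" using hT by blast
      show "compactin ?T {x}" using xB tT by simp
      show "closedin ?T {y}" using closedin_Hausdorff_singleton[OF hT] yB tT by simp
      fix C assume "connectedin ?T C"
      then have "connectedin mtopology C" "C \<subseteq> ?Bd" by (simp_all add: connectedin_subtopology)
      then obtain a where "C \<subseteq> {a}" using td unfolding totally_disconnected_in_def by blast
      then show "disjnt C {x} \<or> disjnt C {y}" using xy(3) by (auto simp: disjnt_def)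
    qed
    then obtain U' V' where UV: "openin ?T U'" "openin ?T V'" "U' \<union> V' = ?Bd"
        "disjnt U' V'" "x \<in> U'" "y \<in> V'"
      unfolding separated_between_def tT by blast
    have "U' = topspace ?T - V'" using UV(3,4) tT by (auto simp: disjnt_def)
    then have "closedin ?T U'" using UV(2) by (metis closedin_diff closedin_topspace)
    then have cU: "compactin mtopology U'"
      using closedin_closed_subtopology[OF Bd_closed] closedin_compact_space[OF cpt] by blast
    have "V' = topspace ?T - U'" using UV(3,4) tT by (auto simp: disjnt_def)
    then have "closedin ?T V'" using UV(1) by (metis closedin_diff closedin_topspace)
    then have cV: "compactin mtopology V'"
      using closedin_closed_subtopology[OF Bd_closed] closedin_compact_space[OF cpt] by blast
    obtain N1 N2 where N: "openin mtopology N1" "openin mtopology N2" "U' \<subseteq> N1" "V' \<subseteq> N2" "disjnt N1 N2"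
      using Hausdorff_space_compact_separation[OF Hausdorff_space_mtopology cU cV UV(4)] by blast
    define K where "K = X - (N1 \<union> N2)"
    have "closedin mtopology K" unfolding K_def
      by (metis N(1,2) closedin_diff closedin_topspace openin_Un topspace_mtopology)
    then have cK: "compactin mtopology K" using closedin_compact_space[OF cpt] by blast
    have KG: "K \<subseteq> \<iota> ` G" unfolding K_def using UV(3) N(3,4) by blast
    define \<U> where "\<U> = {U. good U \<and> x \<notin> mtopology closure_of U \<and> y \<notin> mtopology closure_of U}"
    have cov: "K \<subseteq> \<Union>\<U>"
    proof
      fix p assume "p \<in> K"
      then have pG: "p \<in> \<iota> ` G" and pX: "p \<in> X" using KG K_def by auto
      have "p \<noteq> x" "p \<noteq> y" using pG 3 by auto
      then have pos: "0 < min (D p x) (D p y) / 2" using pX xy mdist_pos_less by auto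
      from good_point[OF pG pos] obtain U where
        U: "good U" "p \<in> U" "mtopology closure_of U \<subseteq> mcball p (min (D p x) (D p y) / 2)" by blast
      have "x \<notin> mcball p (min (D p x) (D p y) / 2)" "y \<notin> mcball p (min (D p x) (D p y) / 2)"
        using pos by auto
      then have "U \<in> \<U>" unfolding \<U>_def using U by blast
      then show "p \<in> \<Union>\<U>" using U(2) by blast
    qed
    have "\<forall>U\<in>\<U>. openin mtopology U" unfolding \<U>_def good_def by blast
    then obtain \<F> where F: "finite \<F>" "\<F> \<subseteq> \<U>" "K \<subseteq> \<Union>\<F>"
      using cK cov unfolding compactin_def by meson
    define Ob where "Ob = \<Union>\<F>"
    have gOb: "good Ob" unfolding Ob_def using good_Union[OF F(1)] F(2) \<U>_def by blast
    have clOb: "mtopology closure_of Ob = (\<Union>U\<in>\<F>. mtopology closure_of U)"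
      unfolding Ob_def using closure_of_Union[OF F(1)] .
    have xOb: "x \<notin> mtopology closure_of Ob" "y \<notin> mtopology closure_of Ob"
      unfolding clOb using F(2) \<U>_def by auto
    have oOb: "openin mtopology Ob" using gOb good_def by blast
    have OX: "Ob \<subseteq> X" by (metis oOb openin_subset topspace_mtopology)
    have N1X: "N1 \<subseteq> X" by (metis N(1) openin_subset topspace_mtopology)
    have N2X: "N2 \<subseteq> X" by (metis N(2) openin_subset topspace_mtopology)
    define U where "U = N1 - mtopology closure_of Ob"
    have oU: "openin mtopology U" unfolding U_def by (rule openin_diff[OF N(1) closedin_closure_of])
    have c1: "closedin mtopology (X - Ob)" by (metis closedin_diff closedin_topspace oOb topspace_mtopology)
    have "U \<subseteq> X - Ob" unfolding U_def using N1X closure_of_subset[of Ob mtopology] OX by auto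
    then have cl1: "mtopology closure_of U \<subseteq> X - Ob" using closure_of_minimal c1 by blast
    have c2: "closedin mtopology (X - N2)" by (metis closedin_diff closedin_topspace N(2) topspace_mtopology)
    have "U \<subseteq> X - N2" unfolding U_def using N1X N(5) by (auto simp: disjnt_def)
    then have cl2: "mtopology closure_of U \<subseteq> X - N2" using closure_of_minimal c2 by blast
    have "X - Ob \<subseteq> N1 \<union> N2" using F(3) unfolding Ob_def K_def by blast
    then have clU: "mtopology closure_of U \<subseteq> N1 - Ob" using cl1 cl2 by blast
    have "mtopology closure_of U - U \<subseteq> mtopology closure_of Ob - Ob"
      using clU unfolding U_def by blast
    then have gU: "good U" using gOb oU unfolding good_def by (meson finite_subset order_trans)
    have "x \<in> U" unfolding U_def using UV(5) N(3) xOb by blast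
    moreover have "y \<notin> mtopology closure_of U" using cl2 UV(6) N(4) by blast
    ultimately show ?thesis using gU by blast
  qed
qed

lemma main_fwd:
  assumes cpt: "compact_space mtopology"
    and td: "totally_disconnected_in mtopology (X - \<iota> ` (G - Vert ` B))"
  shows "weakly_connected mtopology (\<iota> ` G)"
  unfolding weakly_connected_def topspace_mtopology
proof (intro ballI impI)
  fix x y assume xy: "x \<in> X" "y \<in> X" "x \<noteq> y"
  from sep[OF cpt td xy] obtain U where U: "good U" "x \<in> U" "y \<notin> mtopology closure_of U" by blast
  have oU: "openin mtopology U" using U good_def by blast
  have UX: "U \<subseteq> X" by (metis oU openin_subset topspace_mtopology)
  have clX: "mtopology closure_of U \<subseteq> X" by (metis closure_of_subset_topspace topspace_mtopology)
  have Ucl: "U \<subseteq> mtopology closure_of U" by (metis closure_of_subset topspace_mtopology UX)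
  show "\<exists>W Ux Uy. finite W \<and> W \<subseteq> \<iota> ` G \<and> openin mtopology Ux \<and> openin mtopology Uy \<and>
           x \<in> Ux \<and> y \<in> Uy \<and> Ux \<inter> Uy = {} \<and> X - W = Ux \<union> Uy"
  proof (intro exI conjI)
    show "finite (mtopology closure_of U - U)" "mtopology closure_of U - U \<subseteq> \<iota> ` G"
      using U good_def by auto
    show "openin mtopology U" by fact
    show "openin mtopology (X - mtopology closure_of U)"
      by (metis closedin_closure_of openin_diff openin_topspace topspace_mtopology)
    show "x \<in> U" by fact
    show "y \<in> X - mtopology closure_of U" using U xy by blast
    show "U \<inter> (X - mtopology closure_of U) = {}" using Ucl by blast
    show "X - (mtopology closure_of U - U) = U \<union> (X - mtopology closure_of U)"
      using UX clX by blast
  qed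
qed

lemma main_bwd:
  assumes wc: "weakly_connected mtopology (\<iota> ` G)"
  shows "totally_disconnected_in mtopology (X - \<iota> ` (G - Vert ` B))"
  unfolding totally_disconnected_in_def
proof (intro allI impI)
  fix C assume h: "C \<subseteq> X - \<iota> ` (G - Vert ` B) \<and> connectedin mtopology C"
  then have CB: "C \<subseteq> X - \<iota> ` (G - Vert ` B)" and cC: "connectedin mtopology C" by auto
  show "\<exists>a. C \<subseteq> {a}"
  proof (rule ccontr)
    assume nc: "\<nexists>a. C \<subseteq> {a}"
    then obtain x where x: "x \<in> C" by blast
    then obtain y where y: "y \<in> C" "y \<noteq> x" using nc by blast
    have CX: "C \<subseteq> X" using CB by blast
    have nc: "\<nexists>E1 E2. openin mtopology E1 \<and> openin mtopology E2 \<and>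
             C \<subseteq> E1 \<union> E2 \<and> E1 \<inter> E2 \<inter> C = {} \<and> E1 \<inter> C \<noteq> {} \<and> E2 \<inter> C \<noteq> {}"
      using cC unfolding connectedin by blast
    have noG: "C \<inter> \<iota> ` G = {}"
    proof (rule ccontr)
      assume "C \<inter> \<iota> ` G \<noteq> {}"
      then obtain w g where w: "w \<in> C" "g \<in> G" "w = \<iota> g" by blast
      then have "g \<in> Vert ` B" using CB by blast
      then obtain v where v: "g = Vert v" "v \<in> B" by blast
      then have vV: "v \<in> V" using B_V by blast
      have wX: "w \<in> X" using w CX by blast
      let ?E1 = "mball w (rad E ends len v)" and ?E2 = "X - {w}"
      have o1: "openin mtopology ?E1" by simp
      have o2: "openin mtopology ?E2"
        by (metis closedin_Hausdorff_singleton Hausdorff_space_mtopology openin_diff openin_topspace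
              topspace_mtopology wX)
      have "C \<subseteq> ?E1 \<union> ?E2" using CX wX rad_pos[OF vV] by auto
      moreover have "?E1 \<inter> ?E2 \<inter> C = {}"
      proof -
        { fix q assume q: "q \<in> ?E1" "q \<in> ?E2" "q \<in> C"
          then have "D (\<iota> (Vert v)) q < rad E ends len v" using w v by auto
          then have "q = w" using isolated[OF vV, of q] q(3) CB w v by blast
          then have False using q(2) by blast }
        then show ?thesis by blast
      qed
      moreover have "?E1 \<inter> C \<noteq> {}" using w(1) wX rad_pos[OF vV] by auto
      moreover have "?E2 \<inter> C \<noteq> {}" using x y CX by blast
      ultimately have "openin mtopology ?E1 \<and> openin mtopology ?E2 \<and>
             C \<subseteq> ?E1 \<union> ?E2 \<and> ?E1 \<inter> ?E2 \<inter> C = {} \<and> ?E1 \<inter> C \<noteq> {} \<and> ?E2 \<inter> C \<noteq> {}"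
        using o1 o2 by blast
      then show False using nc by blast
    qed
    have xX: "x \<in> X" and yX: "y \<in> X" and xy: "x \<noteq> y" using x y CX by auto
    obtain W Ux Uy where W: "finite W" "W \<subseteq> \<iota> ` G" "openin mtopology Ux" "openin mtopology Uy"
      "x \<in> Ux" "y \<in> Uy" "Ux \<inter> Uy = {}" "X - W = Ux \<union> Uy"
      using wc[unfolded weakly_connected_def topspace_mtopology, rule_format, OF xX yX xy] by blast
    have "C \<subseteq> Ux \<union> Uy" using noG W(2,8) CX by blast
    moreover have "Ux \<inter> Uy \<inter> C = {}" using W(7) by blast
    ultimately have "openin mtopology Ux \<and> openin mtopology Uy \<and>
             C \<subseteq> Ux \<union> Uy \<and> Ux \<inter> Uy \<inter> C = {} \<and> Ux \<inter> C \<noteq> {} \<and> Uy \<inter> C \<noteq> {}"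
      using W(3-6) x y by blast
    then show False using nc by blast
  qed
qed

theorem main:
  assumes cpt: "compact_space mtopology"
  shows "totally_disconnected_in mtopology (X - \<iota> ` (G - Vert ` B))
         \<longleftrightarrow> weakly_connected mtopology (\<iota> ` G)"
  using main_fwd[OF cpt] main_bwd by blast

end

theorem theorem2p5:
  fixes V :: "'v set" and E :: "'e set" and ends :: "'e \<Rightarrow> 'v \<times> 'v"
    and len :: "'e \<Rightarrow> real" and B :: "'v set"
    and X :: "'p set" and D :: "'p \<Rightarrow> 'p \<Rightarrow> real" and \<iota> :: "('v, 'e) gpoint \<Rightarrow> 'p"
  assumes "metric_graph V E ends len B"
    and "is_completion (gpoints V E len) (gdist E ends len) X D \<iota>"
    and "compact_space (Metric_space.mtopology X D)"
  shows "totally_disconnected_in (Metric_space.mtopology X D)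
             (X - \<iota> ` (gpoints V E len - Vert ` B))
         \<longleftrightarrow> weakly_connected (Metric_space.mtopology X D) (\<iota> ` gpoints V E len)"
proof -
  have c: "Metric_space X D" "\<iota> ` gpoints V E len \<subseteq> X"
    "\<forall>x\<in>gpoints V E len. \<forall>y\<in>gpoints V E len. D (\<iota> x) (\<iota> y) = gdist E ends len x y"
    "Metric_space.mtopology X D closure_of (\<iota> ` gpoints V E len) = X"
    using assms(2) unfolding is_completion_def by auto
  interpret MG X D V E ends len B \<iota>
    by (intro MG.intro MG_axioms.intro c assms(1))
  show ?thesis using main[OF assms(3)] .
qed

end
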